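(* Let $\Phi = \{\xi = (\tau_L,\delta_L,\tau_R,\delta_R) \in \mathbb{R}^4 : \tau_L > |\delta_L + 1|,\ \tau_R < -|\delta_R+1|\}$ and $\alpha(\xi) = \tau_L\tau_R + (\delta_L - 1)(\delta_R - 1)$. If $\xi \in \Phi$ and $\delta_L + \delta_R \ge 0$, then $\alpha(\xi) < 0$. *)

theory Defs
  imports Main Complex_Main
begin

definition Phi :: "(real \<times> real \<times> real \<times> real) set" where
  "Phi = {(tL, dL, tR, dR). tL > \<bar>dL + 1\<bar> \<and> tR < - \<bar>dR + 1\<bar>}"

fun alpha :: "real \<times> real \<times> real \<times> real \<Rightarrow> real" where
  "alpha (tL, dL, tR, dR) = tL * tR + (dL - 1) * (dR - 1)"

end

theory Submission
  imports Defs
begin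

theorem proposition4p2:
  fixes tL dL tR dR :: real
  assumes "(tL, dL, tR, dR) \<in> Phi"
    and "dL + dR \<ge> 0"
  shows "alpha (tL, dL, tR, dR) < 0"
proof -
  have a: "tL > \<bar>dL + 1\<bar>" and b: "- tR > \<bar>dR + 1\<bar>" using assms(1) by (auto simp: Phi_def)
  have "\<bar>dL + 1\<bar> * \<bar>dR + 1\<bar> < tL * (- tR)"
    using a b by (intro mult_strict_mono') auto
  moreover have "(dL + 1) * (dR + 1) \<le> \<bar>dL + 1\<bar> * \<bar>dR + 1\<bar>"
    by (metis abs_ge_self abs_mult)
  ultimately have "tL * tR < - ((dL + 1) * (dR + 1))" by linarith
  then show ?thesis using assms(2) by (simp add: algebra_simps)
qed

end
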